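(* Let $n>1$ and $0 < t \leq n$. Let $R$ be a randomized $t$-query algorithm on $n$ input bits, and suppose $K \subseteq \{0,1\}^n$ is a set with $|K| > 2^{n-1}$ such that $\Pr[R(y) = \mathrm{PAR}(y)] \geq 2/3$ for every $y \in K$, where $\mathrm{PAR}(y)=y_1\oplus\cdots\oplus y_n$. Then there exists a Bob-strategy such that, if $(\pi,z)$ is drawn uniformly from $S_n\times\{0,1\}$ and $\mathbf{b} = b(\pi,z)$ is the resulting clue string, then \[ \Pr_{\pi,z,R}\big[\text{the execution of } R \text{ on } \mathbf{b} \text{ is search-successful}\big] \geq 1/3 . \]
   Context: A randomized $t$-query algorithm is a probability distribution over deterministic decision trees of depth $t$ on input variables $b_1,\dots,b_n$, each outputting a bit. Let $S_n$ be the set of permutations $\pi=(\pi(1),\dots,\pi(n))$ of $[n]$. A Bob-strategy is a family of functions $F_t : S_n \to \{0,1\}$, $t=1,\dots,n-1$, where each $F_t(\pi)$ depends only on $\pi(1),\dots,\pi(t)$. For a fixed Bob-strategy, $\pi\in S_n$ and $z\in\{0,1\}$, define $b(\pi,z)\in\{0,1\}^n$ by $b_j = F_t(\pi)$ if $j=\pi(t)$ for some $t<n$, and $b_j=z$ if $j=\pi(n)$. An execution of the randomized algorithm $R$ on $\mathbf{b}=b(\pi,z)$ is search-successful if the set of coordinates queried by $R$ in that execution contains $\pi(n)$. *)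

theory Defs
  imports "HOL-Probability.Probability" "HOL-Combinatorics.Multiset_Permutations"
begin

text \<open>Deterministic decision trees: a leaf outputs a bit; an inner node
  Node i l r queries input bit i (0-based) and continues in l if the bit is
  False (0) and in r if it is True (1).\<close>
datatype dtree = Leaf bool | Node nat dtree dtree

fun depth :: "dtree \<Rightarrow> nat" where
  "depth (Leaf _) = 0"
| "depth (Node _ l r) = Suc (max (depth l) (depth r))"

fun vars :: "dtree \<Rightarrow> nat set" where
  "vars (Leaf _) = {}"
| "vars (Node i l r) = insert i (vars l \<union> vars r)"

definition valid_tree :: "nat \<Rightarrow> nat \<Rightarrow> dtree \<Rightarrow> bool" where
  "valid_tree n t T \<longleftrightarrow> depth T \<le> t \<and> vars T \<subseteq> {..<n}"

fun eval :: "dtree \<Rightarrow> bool list \<Rightarrow> bool" where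
  "eval (Leaf b) y = b"
| "eval (Node i l r) y = (if y ! i then eval r y else eval l y)"

fun queried :: "dtree \<Rightarrow> bool list \<Rightarrow> nat set" where
  "queried (Leaf _) y = {}"
| "queried (Node i l r) y = insert i (queried (if y ! i then r else l) y)"

definition rand_alg :: "nat \<Rightarrow> nat \<Rightarrow> dtree pmf \<Rightarrow> bool" where
  "rand_alg n t R \<longleftrightarrow> (\<forall>T \<in> set_pmf R. valid_tree n t T)"

definition par :: "bool list \<Rightarrow> bool" where
  "par y = odd (length (filter id y))"

text \<open>Permutations of [n] as lists: pi ! (s-1) is pi(s). Coordinates are 0-based.\<close>
abbreviation perms :: "nat \<Rightarrow> nat list set" where
  "perms n \<equiv> permutations_of_set {..<n}"

definition bob_strategy :: "nat \<Rightarrow> (nat \<Rightarrow> nat list \<Rightarrow> bool) \<Rightarrow> bool" where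
  "bob_strategy n F \<longleftrightarrow>
     (\<forall>s \<in> {1..n-1}. \<forall>\<pi> \<in> perms n. \<forall>\<pi>' \<in> perms n.
        take s \<pi> = take s \<pi>' \<longrightarrow> F s \<pi> = F s \<pi>')"

text \<open>Clue string b(pi,z): b_j = F_s(pi) if j = pi(s), s < n; b_{pi(n)} = z.\<close>
definition clue :: "nat \<Rightarrow> (nat \<Rightarrow> nat list \<Rightarrow> bool) \<Rightarrow> nat list \<Rightarrow> bool \<Rightarrow> bool list" where
  "clue n F \<pi> z = map (\<lambda>j. if j = \<pi> ! (n - 1) then z
                           else F (Suc (THE k. k < n \<and> \<pi> ! k = j)) \<pi>) [0..<n]"

end

theory Submission
  imports Defs
begin

definition Cset :: "bool list set \<Rightarrow> nat list \<Rightarrow> bool list \<Rightarrow> bool list set" where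
  "Cset K p bs = {y \<in> K. \<forall>k<length bs. y ! (p ! k) = bs ! k}"

definition chooseb :: "nat \<Rightarrow> bool list set \<Rightarrow> nat list \<Rightarrow> bool list \<Rightarrow> bool" where
  "chooseb n K p bs =
     (card {y \<in> Cset K p bs. y ! (p ! length bs)} * 2 ^ Suc (length bs) > 2 ^ (n - 1))"

fun bits :: "nat \<Rightarrow> bool list set \<Rightarrow> nat list \<Rightarrow> nat \<Rightarrow> bool list" where
  "bits n K p 0 = []"
| "bits n K p (Suc s) = bits n K p s @ [chooseb n K p (bits n K p s)]"

lemma length_bits[simp]: "length (bits n K p s) = s"
  by (induction s) auto

lemma take_bits: "s \<le> s' \<Longrightarrow> take s (bits n K p s') = bits n K p s"
proof (induction s')
  case 0
  then show ?case by simp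
next
  case (Suc s')
  show ?case
  proof (cases "s = Suc s'")
    case True
    then show ?thesis by simp
  next
    case False
    then have "s \<le> s'" using Suc.prems by simp
    then show ?thesis using Suc.IH by simp
  qed
qed

lemma nth_bits: "k < s \<Longrightarrow> s \<le> s' \<Longrightarrow> bits n K p s ! k = bits n K p s' ! k"
  by (metis take_bits nth_take)

lemma Cset_cong: "\<forall>k<length bs. p ! k = p' ! k \<Longrightarrow> Cset K p bs = Cset K p' bs"
  unfolding Cset_def by auto

lemma bits_cong: "take s p = take s p' \<Longrightarrow> bits n K p s = bits n K p' s"
proof (induction s)
  case 0
  then show ?case by simp
next
  case (Suc s)
  have eq: "\<And>k. k < Suc s \<Longrightarrow> p ! k = p' ! k"
    by (metis Suc.prems nth_take)
  have "take s p = take s p'"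
    by (metis Suc.prems min.absorb1 le_SucI order_refl take_take)
  then have IH: "bits n K p s = bits n K p' s" using Suc.IH by simp
  have "Cset K p (bits n K p s) = Cset K p' (bits n K p s)"
    by (rule Cset_cong) (simp add: eq)
  moreover have "p ! s = p' ! s" using eq by simp
  ultimately show ?case using IH by (simp add: chooseb_def)
qed

lemma Cset_snoc: "Cset K p (bs @ [b]) = {y \<in> Cset K p bs. y ! (p ! length bs) = b}"
  unfolding Cset_def
  by (auto simp: nth_append less_Suc_eq)

lemma invariant:
  assumes "finite K" "card K > 2 ^ (n - 1)" "s \<le> n - 1"
  shows "card (Cset K p (bits n K p s)) * 2 ^ s > 2 ^ (n - 1)"
  using assms(3)
proof (induction s)
  case 0
  have "Cset K p [] = K" by (simp add: Cset_def)
  then show ?case using assms(2) by simp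
next
  case (Suc s)
  define C where "C = Cset K p (bits n K p s)"
  define CT where "CT = {y \<in> C. y ! (p ! s)}"
  define CF where "CF = {y \<in> C. \<not> y ! (p ! s)}"
  have fC: "finite C" using assms(1) by (simp add: C_def Cset_def)
  have cardC: "card C = card CT + card CF"
  proof -
    have "C = CT \<union> CF" "CT \<inter> CF = {}" by (auto simp: CT_def CF_def)
    then show ?thesis using fC by (simp add: card_Un_disjoint)
  qed
  have IH: "card C * 2 ^ s > 2 ^ (n - 1)" using Suc C_def by simp
  have ch: "chooseb n K p (bits n K p s) = (card CT * 2 ^ Suc s > 2 ^ (n - 1))"
    by (simp add: chooseb_def CT_def C_def)
  show ?case
  proof (cases "card CT * 2 ^ Suc s > 2 ^ (n - 1)")
    case True
    have "Cset K p (bits n K p (Suc s)) = CT"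
      using True ch by (simp add: Cset_snoc CT_def C_def)
    then show ?thesis using True by simp
  next
    case False
    have e: "Cset K p (bits n K p (Suc s)) = CF"
      using False ch by (simp add: Cset_snoc CF_def C_def)
    have "card C * 2 ^ Suc s = card CT * 2 ^ Suc s + card CF * 2 ^ Suc s"
      using cardC by (simp add: algebra_simps)
    moreover have "card C * 2 ^ Suc s > 2 * 2 ^ (n - 1)" using IH by simp
    ultimately have "card CF * 2 ^ Suc s > 2 ^ (n - 1)" using False by linarith
    then show ?thesis using e by simp
  qed
qed

lemma queried_same:
  assumes "i \<notin> queried T y0" "\<forall>j. j \<noteq> i \<longrightarrow> y0 ! j = y1 ! j"
  shows "eval T y0 = eval T y1 \<and> queried T y0 = queried T y1"
  using assms(1)
proof (induction T)
  case (Leaf x)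
  then show ?case by simp
next
  case (Node j l r)
  then have "j \<noteq> i" by simp
  then have "y0 ! j = y1 ! j" using assms(2) by simp
  then show ?case using Node by (cases "y0 ! j") auto
qed

lemma par_split: "i < length y \<Longrightarrow>
  par y = (odd (length (filter id (take i y)) + (if y ! i then 1 else 0) + length (filter id (drop (Suc i) y))))"
  unfolding par_def
  by (subst id_take_nth_drop[of i y]) auto

lemma par_differ:
  assumes "length y0 = length y1" "i < length y0" "y0 ! i \<noteq> y1 ! i"
    "\<forall>j. j \<noteq> i \<longrightarrow> y0 ! j = y1 ! j"
  shows "par y0 \<noteq> par y1"
proof -
  have "y0 = y1[i := y0 ! i]"
    using assms by (intro nth_equalityI) (auto simp: nth_list_update)
  then have t: "take i y0 = take i y1" and d: "drop (Suc i) y0 = drop (Suc i) y1"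
    using assms by (metis take_update_cancel order_refl, metis drop_update_cancel lessI)
  define a where "a = length (filter id (take i y0))"
  define c where "c = length (filter id (drop (Suc i) y0))"
  have p0: "par y0 = odd (a + (if y0 ! i then 1 else 0) + c)"
    unfolding a_def c_def by (rule par_split) (rule assms(2))
  have p1: "par y1 = odd (a + (if y1 ! i then 1 else 0) + c)"
    unfolding a_def c_def t d by (rule par_split) (use assms(1,2) in simp)
  show ?thesis
  proof (cases "y0 ! i")
    case True
    then have "\<not> y1 ! i" using assms(3) by simp
    then show ?thesis using p0 p1 True by simp
  next
    case False
    then have "y1 ! i" using assms(3) by simp
    then show ?thesis using p0 p1 False by simp
  qed
qed

lemma search_bound:
  assumes "length y0 = length y1" "i < length y0" "y0 ! i \<noteq> y1 ! i"
    "\<forall>j. j \<noteq> i \<longrightarrow> y0 ! j = y1 ! j"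
    "measure_pmf.prob R {T. eval T y0 = par y0} \<ge> 2/3"
    "measure_pmf.prob R {T. eval T y1 = par y1} \<ge> 2/3"
  shows "measure_pmf.prob R {T. i \<in> queried T y0} \<ge> 1/3"
proof -
  define A where "A = {T. eval T y0 = par y0}"
  define B where "B = {T. eval T y1 = par y1}"
  define Q where "Q = {T. i \<in> queried T y0}"
  have pd: "par y0 \<noteq> par y1" using par_differ assms(1-4) by blast
  have sub: "A \<inter> B \<subseteq> Q"
  proof
    fix T assume "T \<in> A \<inter> B"
    then show "T \<in> Q"
      using queried_same[of i T y0 y1] assms(4) pd by (auto simp: A_def B_def Q_def)
  qed
  have "measure_pmf.prob R (A \<union> B) = measure_pmf.prob R A + measure_pmf.prob R (B - A)"
    by (simp add: measure_pmf.finite_measure_Union')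
  moreover have "measure_pmf.prob R B = measure_pmf.prob R (B - A) + measure_pmf.prob R (A \<inter> B)"
  proof -
    have "B = (B - A) \<union> (A \<inter> B)" by auto
    then have "measure_pmf.prob R B = measure_pmf.prob R ((B - A) \<union> (A \<inter> B))" by simp
    also have "\<dots> = measure_pmf.prob R (B - A) + measure_pmf.prob R (A \<inter> B)"
      by (rule measure_pmf.finite_measure_Union) auto
    finally show ?thesis .
  qed
  moreover have "measure_pmf.prob R (A \<union> B) \<le> 1" by simp
  moreover have "measure_pmf.prob R (A \<inter> B) \<le> measure_pmf.prob R Q"
    using sub by (simp add: measure_pmf.finite_measure_mono)
  ultimately show ?thesis using assms(5,6) unfolding A_def B_def Q_def by linarith
qed

lemma perm_facts:
  assumes "p \<in> perms n"
  shows "set p = {..<n}" "distinct p" "length p = n"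
proof -
  show "set p = {..<n}" "distinct p" using assms by (auto simp: permutations_of_set_def)
  then show "length p = n" using distinct_card[of p] by simp
qed

lemma clue_eq:
  assumes p: "p \<in> perms n" and n: "n > 1" and K: "K \<subseteq> {y. length y = n}"
    and y: "y \<in> Cset K p (bits n K p (n - 1))"
    and F: "F = (\<lambda>s p. bits n K p s ! (s - 1))"
  shows "y = clue n F p (y ! (p ! (n - 1)))"
proof -
  note pf = perm_facts[OF p]
  have ly: "length y = n" using y K by (auto simp: Cset_def)
  have yb: "\<And>k. k < n - 1 \<Longrightarrow> y ! (p ! k) = bits n K p (n - 1) ! k"
    using y by (auto simp: Cset_def)
  show ?thesis
  proof (rule nth_equalityI)
    show "length y = length (clue n F p (y ! (p ! (n - 1))))"
      using ly by (simp add: clue_def)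
  next
    fix j assume "j < length y"
    then have j: "j < n" using ly by simp
    show "y ! j = clue n F p (y ! (p ! (n - 1))) ! j"
    proof (cases "j = p ! (n - 1)")
      case True
      then show ?thesis using j by (simp add: clue_def)
    next
      case False
      have "j \<in> set p" using pf j by simp
      then obtain k where k0: "k < length p" "p ! k = j" by (auto simp: in_set_conv_nth)
      have k: "k < n" "p ! k = j" using k0 pf(3) by simp_all
      have the: "(THE k. k < n \<and> p ! k = j) = k"
      proof (rule the_equality)
        show "k < n \<and> p ! k = j" using k by simp
      next
        fix k' assume h: "k' < n \<and> p ! k' = j"
        then have "p ! k' = p ! k" using k by simp
        then show "k' = k"
          using nth_eq_iff_index_eq[OF pf(2), of k' k] h k pf(3) by simp
      qed
      have "k \<noteq> n - 1"
      proof
        assume "k = n - 1"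
        then show False using k(2) False by simp
      qed
      then have kn: "k < n - 1" using k by linarith
      have "clue n F p (y ! (p ! (n - 1))) ! j = F (Suc k) p"
        using j False the by (simp add: clue_def)
      also have "\<dots> = bits n K p (Suc k) ! k" by (simp add: F)
      also have "\<dots> = bits n K p (n - 1) ! k" using kn by (intro nth_bits) auto
      also have "\<dots> = y ! j" using yb[OF kn] k(2) by simp
      finally show ?thesis by simp
    qed
  qed
qed

lemma nth_beyond: "length xs \<le> j \<Longrightarrow> xs ! j = [] ! (j - length xs)"
proof (induction xs arbitrary: j)
  case Nil
  then show ?case by simp
next
  case (Cons x xs)
  then obtain j' where "j = Suc j'" by (cases j) auto
  then show ?case using Cons by simp
qed

theorem theorem2:
  fixes n t :: nat and R :: "dtree pmf" and K :: "bool list set"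
  assumes "n > 1" and "0 < t" and "t \<le> n"
    and "rand_alg n t R"
    and "K \<subseteq> {y. length y = n}" and "card K > 2 ^ (n - 1)"
    and "\<forall>y \<in> K. measure_pmf.prob R {T. eval T y = par y} \<ge> 2/3"
  shows "\<exists>F. bob_strategy n F \<and>
           measure_pmf.prob
             (pmf_of_set (perms n \<times> (UNIV :: bool set)) \<bind>
                (\<lambda>(\<pi>, z). map_pmf (\<lambda>T. (\<pi>, z, T)) R))
             {(\<pi>, z, T). \<pi> ! (n - 1) \<in> queried T (clue n F \<pi> z)} \<ge> 1/3"
proof -
  have finK: "finite K"
  proof (rule finite_subset[OF assms(5)])
    have "finite {xs. set xs \<subseteq> (UNIV :: bool set) \<and> length xs = n}"
      by (rule finite_lists_length_eq) simp
    then show "finite {y :: bool list. length y = n}" by simp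
  qed
  define F where "F = (\<lambda>s p. bits n K p s ! (s - 1))"
  have bob: "bob_strategy n F"
    unfolding bob_strategy_def F_def
  proof (intro ballI impI)
    fix s p p' assume "take s p = take s (p' :: nat list)"
    then show "bits n K p s ! (s - 1) = bits n K p' s ! (s - 1)"
      by (simp add: bits_cong[of s p p' n K])
  qed
  have key: "measure_pmf.prob R {T. p ! (n - 1) \<in> queried T (clue n F p z)} \<ge> 1/3"
    if p: "p \<in> perms n" for p z
  proof -
    note pf = perm_facts[OF p]
    define C where "C = Cset K p (bits n K p (n - 1))"
    have "card C * 2 ^ (n - 1) > 2 ^ (n - 1)"
      unfolding C_def using invariant[OF finK assms(6), of "n - 1" p] by simp
    then have c2: "card C \<ge> 2"
    proof -
      assume h: "card C * 2 ^ (n - 1) > 2 ^ (n - 1)"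
      show "card C \<ge> 2"
      proof (rule ccontr)
        assume "\<not> card C \<ge> 2"
        then have "card C \<le> 1" by simp
        then have "card C * 2 ^ (n - 1) \<le> 1 * 2 ^ (n - 1)" by (rule mult_right_mono) simp
        then show False using h by simp
      qed
    qed
    have sub: "C \<subseteq> {clue n F p True, clue n F p False}"
    proof
      fix y assume "y \<in> C"
      then have "y = clue n F p (y ! (p ! (n - 1)))"
        using clue_eq[OF p assms(1) assms(5) _ F_def] C_def by blast
      then show "y \<in> {clue n F p True, clue n F p False}" by (cases "y ! (p ! (n - 1))") auto
    qed
    have "C = {clue n F p True, clue n F p False}"
    proof (rule ccontr)
      assume "C \<noteq> {clue n F p True, clue n F p False}"
      then have "C \<subset> {clue n F p True, clue n F p False}" using sub by blast
      then have "card C < card {clue n F p True, clue n F p False}"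
        by (intro psubset_card_mono) auto
      also have "\<dots> \<le> 2" by (simp add: card_insert_le_m1)
      finally show False using c2 by simp
    qed
    then have inK: "clue n F p b \<in> K" for b
      unfolding C_def Cset_def by (cases b) auto
    define i where "i = p ! (n - 1)"
    have "n - 1 < length p" using pf assms(1) by simp
    then have "i \<in> set p" unfolding i_def by (rule nth_mem)
    then have i: "i < n" using pf by simp
    have len: "length (clue n F p b) = n" for b by (simp add: clue_def)
    have at_i: "clue n F p b ! i = b" for b using i by (simp add: clue_def i_def)
    have off: "\<forall>j. j \<noteq> i \<longrightarrow> clue n F p b ! j = clue n F p b' ! j" for b b'
    proof (intro allI impI)
      fix j assume "j \<noteq> i"
      show "clue n F p b ! j = clue n F p b' ! j"
      proof (cases "j < n")
        case True
        then show ?thesis using \<open>j \<noteq> i\<close> by (simp add: clue_def i_def)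
      next
        case False
        show ?thesis using nth_beyond[of "clue n F p b" j] nth_beyond[of "clue n F p b'" j]
          False len[of b] len[of b'] by simp
      qed
    qed
    show ?thesis
      using search_bound[of "clue n F p z" "clue n F p (\<not> z)" i R] len i at_i off inK assms(7)
      unfolding i_def by auto
  qed
  define M where "M = pmf_of_set (perms n \<times> (UNIV :: bool set))"
  define A where "A = {(\<pi>, z, T). \<pi> ! (n - 1) \<in> queried T (clue n F \<pi> z)}"
  define N :: "nat list \<times> bool \<Rightarrow> (nat list \<times> bool \<times> dtree) pmf" where "N = (\<lambda>(\<pi>, z). map_pmf (\<lambda>T. (\<pi>, z, T)) R)"
  have fin: "finite (perms n \<times> (UNIV :: bool set))" by simp
  have ne: "perms n \<times> (UNIV :: bool set) \<noteq> {}" by simp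
  have Nx: "measure_pmf.prob (N x) A \<ge> 1/3" if "x \<in> set_pmf M" for x
  proof -
    obtain p z where x: "x = (p, z)" by fastforce
    have p: "p \<in> perms n" using that fin ne x by (simp add: M_def)
    have "measure_pmf.prob (N x) A = measure_pmf.prob R {T. p ! (n - 1) \<in> queried T (clue n F p z)}"
      by (simp add: N_def x A_def vimage_def)
    then show ?thesis using key[OF p] by simp
  qed
  have "ennreal (measure_pmf.prob (bind_pmf M N) A) = emeasure (bind_pmf M N) A"
    by (simp add: measure_pmf.emeasure_eq_measure)
  also have "\<dots> = (\<integral>\<^sup>+x. emeasure (N x) A \<partial>M)" by simp
  also have "\<dots> \<ge> (\<integral>\<^sup>+x. ennreal (1/3) \<partial>M)"
  proof (intro nn_integral_mono_AE)
    show "AE x in measure_pmf M. ennreal (1/3) \<le> emeasure (measure_pmf (N x)) A"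
      unfolding AE_measure_pmf_iff
    proof
      fix x assume "x \<in> set_pmf M"
      then have "1/3 \<le> measure_pmf.prob (N x) A" by (rule Nx)
      then show "ennreal (1/3) \<le> emeasure (measure_pmf (N x)) A"
        by (simp add: measure_pmf.emeasure_eq_measure)
    qed
  qed
  finally have "ennreal (1/3) \<le> ennreal (measure_pmf.prob (bind_pmf M N) A)" by simp
  then have "1/3 \<le> measure_pmf.prob (bind_pmf M N) A"
    by (simp add: ennreal_le_iff)
  then show ?thesis unfolding M_def N_def A_def using bob by blast
qed

end
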